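(* Let $n\geqslant2$ and $r_1, \ldots , r_n$ be positive integers with $r_1<r_2<\cdots<r_n$. Then $$\varphi\big(C(r_1, \ldots, r_n)\big)=\varphi^{r_n-r_{n-1}}\big(C(r_1, \ldots, r_{n-1})\big)\varphi\big(C(r_1, \ldots, r_{n-2})\big)\frac{x^2-r_n}{x^2-r_{n-1}}.$$
   Context: For a graph $G$, $\varphi(G;x)$ (abbreviated $\varphi(G)$) denotes the characteristic polynomial of its adjacency matrix. For rooted trees $T_1,T_2$ with disjoint vertex sets and a positive integer $n$, $T_1\sim nT_2$ denotes the rooted tree obtained from $T_1$ and $n$ copies of $T_2$ by joining the root of $T_1$ to the roots of the copies of $T_2$; the root of $T_1$ is the root of the result. For positive integers $r_1<\cdots<r_n$, the rooted tree $C(r_1,\ldots,r_n)$ is defined recursively by $C(r_1,\ldots,r_n)=C(r_1,\ldots,r_{n-2})\sim (r_n-r_{n-1})C(r_1,\ldots,r_{n-1})$ for $n\geqslant2$, where $C(\,)$ is the one-vertex tree and $C(r_1)$ is the star on $r_1+1$ vertices rooted at its center. *)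

theory Defs
  imports "Jordan_Normal_Form.Char_Poly"
begin

datatype rtree = Node "rtree list"

fun tsize :: "rtree \<Rightarrow> nat" where
  "tsize (Node ts) = Suc (sum_list (map tsize ts))"

text \<open>Vertices are numbered in preorder: the root is 0 and the subtrees of the root
  occupy consecutive blocks starting at 1. fedges off ts gives the edges from the
  root 0 to the roots of the subtrees ts (whose block starts at off), together with
  the edges inside these subtrees. Edges are ordered pairs (parent, child).\<close>
fun tedges :: "rtree \<Rightarrow> (nat \<times> nat) set"
and fedges :: "nat \<Rightarrow> rtree list \<Rightarrow> (nat \<times> nat) set" where
  "tedges (Node ts) = fedges 1 ts"
| "fedges off [] = {}"
| "fedges off (t # ts) =
     insert (0, off) ((\<lambda>(a,b). (a + off, b + off)) ` tedges t) \<union> fedges (off + tsize t) ts"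

definition adj_mat :: "rtree \<Rightarrow> int mat" where
  "adj_mat T = mat (tsize T) (tsize T)
     (\<lambda>(i,j). if (i,j) \<in> tedges T \<or> (j,i) \<in> tedges T then 1 else 0)"

definition phi :: "rtree \<Rightarrow> int poly" where
  "phi T = char_poly (adj_mat T)"

text \<open>T1 ~ n T2: join the root of T1 to the roots of n copies of T2.\<close>
fun tjoin :: "rtree \<Rightarrow> nat \<Rightarrow> rtree \<Rightarrow> rtree" where
  "tjoin (Node ts) n T2 = Node (ts @ replicate n T2)"

text \<open>C on the reversed list of parameters (last parameter first).\<close>
fun Crev :: "nat list \<Rightarrow> rtree" where
  "Crev [] = Node []"
| "Crev [r] = Node (replicate r (Node []))"
| "Crev (a # b # rest) = tjoin (Crev rest) (a - b) (Crev (b # rest))"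

definition C :: "nat list \<Rightarrow> rtree" where
  "C rs = Crev (rev rs)"

end

theory Submission
  imports Defs
begin

lemma det_row_split:
  fixes A B C :: "'a::comm_ring_1 mat"
  assumes A: "A \<in> carrier_mat n n" and B: "B \<in> carrier_mat n n" and C: "C \<in> carrier_mat n n"
  and k: "k < n"
  and same: "\<And>i j. i < n \<Longrightarrow> j < n \<Longrightarrow> i \<noteq> k \<Longrightarrow> B $$ (i,j) = A $$ (i,j) \<and> C $$ (i,j) = A $$ (i,j)"
  and sm: "\<And>j. j < n \<Longrightarrow> A $$ (k,j) = B $$ (k,j) + C $$ (k,j)"
  shows "det A = det B + det C"
proof -
  have eA: "A = mat\<^sub>r n n (\<lambda>i. if i = k then row B i + row C i else row A i)"
    by (rule eq_matI) (use A B C sm in auto)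
  have eB: "B = mat\<^sub>r n n (\<lambda>i. if i = k then row B i else row A i)"
    by (rule eq_matI) (use A B C same in auto)
  have eC: "C = mat\<^sub>r n n (\<lambda>i. if i = k then row C i else row A i)"
    by (rule eq_matI) (use A B C same in auto)
  have "det (mat\<^sub>r n n (\<lambda>i. if i = k then row B i + row C i else row A i)) =
    det (mat\<^sub>r n n (\<lambda>i. if i = k then row B i else row A i)) +
    det (mat\<^sub>r n n (\<lambda>i. if i = k then row C i else row A i))"
    by (rule det_row_add) (use A B C k in auto)
  then show ?thesis using eA eB eC by metis
qed

lemma det_col_split:
  fixes A B C :: "'a::comm_ring_1 mat"
  assumes A: "A \<in> carrier_mat n n" and B: "B \<in> carrier_mat n n" and C: "C \<in> carrier_mat n n"
  and k: "k < n"
  and same: "\<And>i j. i < n \<Longrightarrow> j < n \<Longrightarrow> j \<noteq> k \<Longrightarrow> B $$ (i,j) = A $$ (i,j) \<and> C $$ (i,j) = A $$ (i,j)"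
  and sm: "\<And>i. i < n \<Longrightarrow> A $$ (i,k) = B $$ (i,k) + C $$ (i,k)"
  shows "det A = det B + det C"
proof -
  have "det (A\<^sup>T) = det (B\<^sup>T) + det (C\<^sup>T)"
    by (rule det_row_split[of _ n _ _ k]) (use A B C k same sm in auto)
  then show ?thesis using det_transpose A B C by metis
qed

definition single :: "nat \<Rightarrow> nat \<Rightarrow> 'a::zero \<Rightarrow> 'a mat" where
  "single m n a = mat m n (\<lambda>(i,j). if i = 0 \<and> j = 0 then a else 0)"

lemma block_det:
  fixes K P :: "'a::idom mat"
  assumes K: "K \<in> carrier_mat (Suc r) (Suc r)" and P: "P \<in> carrier_mat (Suc s) (Suc s)"
  shows "det (four_block_mat K (single (Suc r) (Suc s) a) (single (Suc s) (Suc r) b) P)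
     = det K * det P - a * b * det (mat_delete K 0 0) * det (mat_delete P 0 0)"
proof -
  let ?U = "single (Suc r) (Suc s) a" and ?V = "single (Suc s) (Suc r) b"
  let ?M = "four_block_mat K ?U ?V P"
  define N where "N = Suc r + Suc s"
  define K2 where "K2 = mat (Suc r) (Suc r) (\<lambda>(i,j). if i = 0 then 0 else K $$ (i,j))"
  define K3 where "K3 = mat (Suc r) (Suc r) (\<lambda>(i,j). if i = 0 \<or> j = 0 then 0 else K $$ (i,j))"
  let ?M1 = "four_block_mat K (0\<^sub>m (Suc r) (Suc s)) ?V P"
  let ?M2 = "four_block_mat K2 ?U ?V P"
  let ?M21 = "four_block_mat K2 ?U (0\<^sub>m (Suc s) (Suc r)) P"
  let ?M22 = "four_block_mat K3 ?U ?V P"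
  have U: "?U \<in> carrier_mat (Suc r) (Suc s)" and V: "?V \<in> carrier_mat (Suc s) (Suc r)"
    by (auto simp: single_def)
  have K2: "K2 \<in> carrier_mat (Suc r) (Suc r)" and K3: "K3 \<in> carrier_mat (Suc r) (Suc r)"
    by (auto simp: K2_def K3_def)
  have Mc: "?M \<in> carrier_mat N N" using K P U V by (auto simp: N_def)
  have M1c: "?M1 \<in> carrier_mat N N" using K P U V by (auto simp: N_def)
  have M2c: "?M2 \<in> carrier_mat N N" using K2 P U V by (auto simp: N_def)
  have M21c: "?M21 \<in> carrier_mat N N" using K2 P U V by (auto simp: N_def)
  have M22c: "?M22 \<in> carrier_mat N N" using K3 P U V by (auto simp: N_def)
  have s1: "det ?M = det ?M1 + det ?M2"
    by (rule det_row_split[OF Mc M1c M2c, of 0]) (use K P in \<open>auto simp: N_def single_def K2_def\<close>)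
  have d1: "det ?M1 = det K * det P"
    by (rule det_four_block_mat_upper_right_zero[OF K refl V P])
  have s2: "det ?M2 = det ?M21 + det ?M22"
    by (rule det_col_split[OF M2c M21c M22c, of 0]) (use K P in \<open>auto simp: N_def single_def K2_def K3_def\<close>)
  have "det K2 = 0"
    using laplace_expansion_row[OF K2, of 0] by (simp add: K2_def)
  then have d21: "det ?M21 = 0"
    using det_four_block_mat_lower_left_zero[OF K2 U refl P] by simp
  define D1 where "D1 = mat_delete ?M22 0 (Suc r)"
  define D2 where "D2 = mat_delete D1 r 0"
  have D1c: "D1 \<in> carrier_mat (r + Suc s) (r + Suc s)" using K3 P U V by (auto simp: D1_def N_def mat_delete_def)
  have "det ?M22 = (\<Sum>j<N. ?M22 $$ (0,j) * cofactor ?M22 0 j)"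
    by (rule laplace_expansion_row[OF M22c]) (simp add: N_def)
  also have "\<dots> = (\<Sum>j<N. if j = Suc r then a * cofactor ?M22 0 j else 0)"
    by (rule sum.cong) (use K P in \<open>auto simp: N_def single_def K3_def\<close>)
  also have "\<dots> = a * cofactor ?M22 0 (Suc r)" by (simp add: N_def)
  finally have e1: "det ?M22 = a * (-1)^(Suc r) * det D1" by (simp add: cofactor_def D1_def)
  have "det D1 = (\<Sum>i<r + Suc s. D1 $$ (i,0) * cofactor D1 i 0)"
    by (rule laplace_expansion_column[OF D1c]) simp
  also have "\<dots> = (\<Sum>i<r + Suc s. if i = r then b * cofactor D1 i 0 else 0)"
    by (rule sum.cong) (use K P in \<open>auto simp: D1_def mat_delete_def single_def K3_def\<close>)
  also have "\<dots> = b * cofactor D1 r 0" by simp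
  finally have e2: "det D1 = b * (-1)^r * det D2" by (simp add: cofactor_def D2_def)
  have D2e: "D2 = four_block_mat (mat_delete K 0 0) (0\<^sub>m r s) (0\<^sub>m s r) (mat_delete P 0 0)"
    by (rule eq_matI) (use K P in \<open>auto simp: D2_def D1_def mat_delete_def single_def K3_def Suc_diff_le\<close>)
  have "det D2 = det (mat_delete K 0 0) * det (mat_delete P 0 0)"
    unfolding D2e
    by (rule det_four_block_mat_upper_right_zero) (use K P in \<open>auto simp: mat_delete_def\<close>)
  then show ?thesis using s1 d1 s2 d21 e1 e2
    by (simp add: algebra_simps)
qed


lemma mat_delete_block:
  fixes K P :: "'a::comm_ring_1 mat"
  assumes K: "K \<in> carrier_mat (Suc r) (Suc r)" and P: "P \<in> carrier_mat (Suc s) (Suc s)"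
  shows "mat_delete (four_block_mat K (single (Suc r) (Suc s) a) (single (Suc s) (Suc r) b) P) 0 0
     = four_block_mat (mat_delete K 0 0) (0\<^sub>m r (Suc s)) (0\<^sub>m (Suc s) r) P"
  by (rule eq_matI) (use K P in \<open>auto simp: mat_delete_def single_def Suc_diff_le\<close>)



lemma tsize_pos: "tsize t > 0" by (cases t) auto

lemma fedges_append:
  "fedges off (xs @ ys) = fedges off xs \<union> fedges (off + sum_list (map tsize xs)) ys"
  by (induction xs arbitrary: off) (auto simp: add.assoc)

lemma edges_bound:
  "(\<forall>a b. (a,b) \<in> tedges t \<longrightarrow> a < tsize t \<and> b < tsize t)"
  "(\<forall>a b. (a,b) \<in> fedges off ts \<longrightarrow> a < off + sum_list (map tsize ts) \<and> b < off + sum_list (map tsize ts))"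
proof (induction t and off ts rule: tedges_fedges.induct)
  case (3 off t ts)
  then show ?case using tsize_pos[of t] by fastforce
qed auto

lemma tedges_snoc:
  assumes i: "i < tsize (Node ts) + tsize t" and j: "j < tsize (Node ts) + tsize t"
  shows "(i,j) \<in> tedges (Node (ts @ [t])) \<longleftrightarrow>
    (i < tsize (Node ts) \<and> j < tsize (Node ts) \<and> (i,j) \<in> tedges (Node ts)) \<or>
    (i = 0 \<and> j = tsize (Node ts)) \<or>
    (tsize (Node ts) \<le> i \<and> tsize (Node ts) \<le> j \<and> (i - tsize (Node ts), j - tsize (Node ts)) \<in> tedges t)"
  using edges_bound(2)[of 1 ts]
  by (auto simp: fedges_append) force+



lemma adj_carrier: "adj_mat T \<in> carrier_mat (tsize T) (tsize T)"
  by (simp add: adj_mat_def)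

lemma cpm_dim[simp]: "dim_row (char_poly_matrix (adj_mat T)) = tsize T"
  "dim_col (char_poly_matrix (adj_mat T)) = tsize T"
  by (simp_all add: char_poly_matrix_def adj_mat_def)

lemma cpm_entry: "i < tsize T \<Longrightarrow> j < tsize T \<Longrightarrow> char_poly_matrix (adj_mat T) $$ (i,j) =
   (if i = j then [:0,1:] else 0) + [:- (if (i,j) \<in> tedges T \<or> (j,i) \<in> tedges T then 1 else 0):]"
  by (simp add: char_poly_matrix_def adj_mat_def)

lemma cpm_snoc:
  "char_poly_matrix (adj_mat (Node (ts @ [t]))) =
   four_block_mat (char_poly_matrix (adj_mat (Node ts)))
     (single (tsize (Node ts)) (tsize t) (-1)) (single (tsize t) (tsize (Node ts)) (-1))
     (char_poly_matrix (adj_mat t))"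
  (is "?L = ?R")
proof (rule eq_matI)
  let ?o = "tsize (Node ts)"
  have ts: "tsize (Node (ts @ [t])) = ?o + tsize t" by simp
  show "dim_row ?L = dim_row ?R" "dim_col ?L = dim_col ?R"
    by (simp_all add: ts del: tsize.simps)
  fix i j assume i: "i < dim_row ?R" and j: "j < dim_col ?R"
  then have i': "i < ?o + tsize t" and j': "j < ?o + tsize t"
    by (simp_all del: tsize.simps)
  note e1 = tedges_snoc[OF i' j'] and e2 = tedges_snoc[OF j' i']
  have "?L $$ (i,j) = (if i = j then [:0,1:] else 0) +
      [:- (if (i,j) \<in> tedges (Node (ts @ [t])) \<or> (j,i) \<in> tedges (Node (ts @ [t])) then 1 else 0):]"
    using i' j' by (intro cpm_entry) (simp_all only: ts)
  also have "\<dots> = ?R $$ (i,j)"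
    using i' j' tsize_pos[of t] tsize_pos[of "Node ts"]
    by (simp only: e1 e2) (auto simp: cpm_entry single_def simp del: tsize.simps tedges.simps)
  finally show "?L $$ (i,j) = ?R $$ (i,j)" .
qed



definition Dt :: "rtree \<Rightarrow> int poly" where
  "Dt T = det (mat_delete (char_poly_matrix (adj_mat T)) 0 0)"

lemma cpm_carrier: "char_poly_matrix (adj_mat T) \<in> carrier_mat (tsize T) (tsize T)"
  by (rule carrier_matI[OF cpm_dim])

lemma ts1: "tsize (Node []) = 1" by simp

lemma phi_snoc: "phi (Node (ts @ [t])) = phi (Node ts) * phi t - Dt (Node ts) * Dt t"
proof -
  obtain r where r: "tsize (Node ts) = Suc r" using tsize_pos[of "Node ts"] gr0_implies_Suc by blast
  obtain s where s: "tsize t = Suc s" using tsize_pos[of t] gr0_implies_Suc by blast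
  have "phi (Node (ts @ [t])) = det (four_block_mat (char_poly_matrix (adj_mat (Node ts)))
     (single (Suc r) (Suc s) (-1)) (single (Suc s) (Suc r) (-1)) (char_poly_matrix (adj_mat t)))"
    unfolding phi_def char_poly_def cpm_snoc r s ..
  also have "\<dots> = phi (Node ts) * phi t - Dt (Node ts) * Dt t"
    using block_det[of "char_poly_matrix (adj_mat (Node ts))" r "char_poly_matrix (adj_mat t)" s "-1" "-1"]
      cpm_carrier[of "Node ts"] cpm_carrier[of t] r s
    by (simp add: phi_def char_poly_def Dt_def del: tsize.simps)
  finally show ?thesis .
qed

lemma Dt_snoc: "Dt (Node (ts @ [t])) = Dt (Node ts) * phi t"
proof -
  obtain r where r: "tsize (Node ts) = Suc r" using tsize_pos[of "Node ts"] gr0_implies_Suc by blast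
  obtain s where s: "tsize t = Suc s" using tsize_pos[of t] gr0_implies_Suc by blast
  let ?K = "char_poly_matrix (adj_mat (Node ts))" and ?P = "char_poly_matrix (adj_mat t)"
  have K: "?K \<in> carrier_mat (Suc r) (Suc r)" and P: "?P \<in> carrier_mat (Suc s) (Suc s)"
    using cpm_carrier[of "Node ts"] cpm_carrier[of t] r s by (simp_all del: tsize.simps)
  have e: "mat_delete (four_block_mat ?K (single (Suc r) (Suc s) (-1)) (single (Suc s) (Suc r) (-1)) ?P) 0 0
     = four_block_mat (mat_delete ?K 0 0) (0\<^sub>m r (Suc s)) (0\<^sub>m (Suc s) r) ?P"
    by (rule mat_delete_block[OF K P])
  have "Dt (Node (ts @ [t])) = det (four_block_mat (mat_delete ?K 0 0) (0\<^sub>m r (Suc s)) (0\<^sub>m (Suc s) r) ?P)"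
    unfolding Dt_def cpm_snoc r s e ..
  also have "\<dots> = Dt (Node ts) * phi t"
    unfolding Dt_def phi_def char_poly_def
    by (rule det_four_block_mat_upper_right_zero) (use K P in \<open>auto simp: mat_delete_def\<close>)
  finally show ?thesis .
qed

lemma rep_Dt: "Dt (Node (ts @ replicate m T)) = Dt (Node ts) * phi T ^ m"
proof (induction m)
  case (Suc m)
  have "ts @ replicate (Suc m) T = (ts @ replicate m T) @ [T]"
    by (simp add: replicate_append_same[symmetric])
  then show ?case using Suc Dt_snoc[of "ts @ replicate m T" T] by (simp only:) (simp add: algebra_simps)
qed simp

lemma rep_phi: "phi (Node (ts @ replicate m T)) =
   phi (Node ts) * phi T ^ m - of_nat m * Dt (Node ts) * Dt T * phi T ^ (m - 1)"
proof (induction m)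
  case (Suc m)
  have "ts @ replicate (Suc m) T = (ts @ replicate m T) @ [T]"
    by (simp add: replicate_append_same[symmetric])
  then have "phi (Node (ts @ replicate (Suc m) T)) =
     (phi (Node ts) * phi T ^ m - of_nat m * Dt (Node ts) * Dt T * phi T ^ (m - 1)) * phi T
     - Dt (Node ts) * phi T ^ m * Dt T"
    using Suc phi_snoc[of "ts @ replicate m T" T] rep_Dt[of ts m T] by (simp only:)
  also have "\<dots> = phi (Node ts) * phi T ^ Suc m - of_nat (Suc m) * Dt (Node ts) * Dt T * phi T ^ (Suc m - 1)"
    by (cases m) (simp_all add: algebra_simps)
  finally show ?case .
qed simp

lemma phi_leaf: "phi (Node []) = [:0,1:]"
proof -
  have c: "char_poly_matrix (adj_mat (Node [])) \<in> carrier_mat 1 1" using cpm_carrier[of "Node []"] unfolding ts1 .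
  have e0: "char_poly_matrix (adj_mat (Node [])) $$ (0,0) = [:0,1:] + [:- (if (0, 0) \<in> tedges (Node []) then 1 else 0):]"
    using cpm_entry[of 0 "Node []" 0] unfolding ts1 by simp
  have "tedges (Node []) = {}" by simp
  then have e: "char_poly_matrix (adj_mat (Node [])) $$ (0,0) = [:0,1:]" using e0 by simp
  show ?thesis unfolding phi_def char_poly_def det_single[OF c] by (rule e)
qed
lemma Dt_leaf: "Dt (Node []) = 1"
proof -
  have "mat_delete (char_poly_matrix (adj_mat (Node []))) 0 0 \<in> carrier_mat 0 0"
    using mat_delete_carrier[OF cpm_carrier[of "Node []"], of 0 0] unfolding ts1 by simp
  then show ?thesis unfolding Dt_def by (rule det_dim_zero)
qed


lemma Q_sub: "([:- int c, 0, 1:] :: int poly) - of_nat m = [:- int (c + m), 0, 1:]"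
  by (simp add: of_nat_poly)

lemma Qx: "([:- int b, 0, 1:] :: int poly) = [:0,1:]^2 - of_nat b"
  using Q_sub[of 0 b] by (simp add: power2_eq_square)

lemma alg_nil:
  fixes x :: "'a::comm_ring_1"
  shows "(x * x ^ b - of_nat b * 1 * 1 * x ^ (b - 1)) * x = (x^2 - of_nat b) * (1 * x ^ b) * 1"
proof (cases b)
  case 0 then show ?thesis by (simp add: power2_eq_square)
next
  case (Suc k)
  then show ?thesis by (simp add: power2_eq_square algebra_simps)
qed

lemma alg_step:
  fixes p1 p2 d1 d2 Q :: "'a::comm_ring_1"
  assumes "p2 * p1 = Q * d2 * d1"
  shows "(p1 * p2 ^ m - of_nat m * d1 * d2 * p2 ^ (m - 1)) * p2 = (Q - of_nat m) * (d1 * p2 ^ m) * d2"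
proof (cases m)
  case 0 then show ?thesis using assms by (simp add: algebra_simps)
next
  case (Suc k)
  have "(p1 * p2 ^ m - of_nat m * d1 * d2 * p2 ^ (m - 1)) * p2 = p2 ^ m * (p2 * p1) - of_nat m * d1 * d2 * p2 ^ m"
    using Suc by (simp add: algebra_simps)
  also have "\<dots> = (Q - of_nat m) * (d1 * p2 ^ m) * d2"
    unfolding assms by (simp add: algebra_simps)
  finally show ?thesis .
qed

lemma alg_main:
  fixes p1 p2 d1 d2 Q :: "'a::comm_ring_1"
  assumes "p2 * p1 = Q * d2 * d1" and m: "m > 0"
  shows "(p1 * p2 ^ m - of_nat m * d1 * d2 * p2 ^ (m - 1)) * Q = p2 ^ m * p1 * (Q - of_nat m)"
proof -
  obtain k where Suc: "m = Suc k" using m gr0_implies_Suc by blast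
  have "(p1 * p2 ^ m - of_nat m * d1 * d2 * p2 ^ (m - 1)) * Q = p2 ^ m * p1 * Q - of_nat m * p2 ^ k * (Q * d2 * d1)"
    using Suc by (simp add: algebra_simps)
  also have "\<dots> = p2 ^ m * p1 * (Q - of_nat m)"
    unfolding assms(1)[symmetric] using Suc by (simp add: algebra_simps)
  finally show ?thesis .
qed

lemma crev_inv:
  "sorted_wrt (\<lambda>x y. y \<le> x) (b # l) \<Longrightarrow>
   phi (Crev (b # l)) * phi (Crev l) = [:- int b, 0, 1:] * Dt (Crev (b # l)) * Dt (Crev l)"
proof (induction l arbitrary: b)
  case Nil
  have T: "Crev [b] = Node ([] @ replicate b (Node []))" by simp
  show ?case unfolding T rep_phi rep_Dt
    unfolding phi_leaf Dt_leaf Qx Crev.simps(1) phi_leaf Dt_leaf by (rule alg_nil)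
next
  case (Cons c l')
  from Cons.prems have cb: "c \<le> b" and sc: "sorted_wrt (\<lambda>x y. y \<le> x) (c # l')" by auto
  note IH = Cons.IH[OF sc]
  obtain ts where ts: "Crev l' = Node ts" by (cases "Crev l'") auto
  obtain m where m: "b = c + m" using cb le_Suc_ex by blast
  have T: "Crev (b # c # l') = Node (ts @ replicate m (Crev (c # l')))" using ts m by simp
  have IH': "phi (Crev (c # l')) * phi (Node ts) = [:- int c, 0, 1:] * Dt (Crev (c # l')) * Dt (Node ts)"
    using IH unfolding ts .
  show ?case unfolding T rep_phi rep_Dt
    using alg_step[OF IH', of m] unfolding Q_sub m[symmetric] .
qed

lemma crev_main:
  assumes s: "sorted_wrt (\<lambda>x y. y \<le> x) (b # l)" and ba: "b < a"
  shows "phi (Crev (a # b # l)) * [:- int b, 0, 1:] =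
         phi (Crev (b # l)) ^ (a - b) * phi (Crev l) * [:- int a, 0, 1:]"
proof -
  obtain ts where ts: "Crev l = Node ts" by (cases "Crev l") auto
  have T: "Crev (a # b # l) = Node (ts @ replicate (a - b) (Crev (b # l)))" using ts by simp
  have I: "phi (Crev (b # l)) * phi (Node ts) = [:- int b, 0, 1:] * Dt (Crev (b # l)) * Dt (Node ts)"
    using crev_inv[OF s] unfolding ts .
  have ab: "b + (a - b) = a" using ba by simp
  show ?thesis unfolding T rep_phi ts
    using alg_main[OF I, of "a - b"] ba unfolding Q_sub ab by simp
qed

theorem lemma2:
  fixes r :: "nat \<Rightarrow> nat" and n :: nat
  assumes "n \<ge> 2"
    and "\<forall>i\<in>{1..n}. r i > 0"
    and "\<forall>i j. 1 \<le> i \<and> i < j \<and> j \<le> n \<longrightarrow> r i < r j"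
  shows "phi (C (map r [1..<n+1])) * [:- int (r (n - 1)), 0, 1:]
       = phi (C (map r [1..<n])) ^ (r n - r (n - 1)) * phi (C (map r [1..<n - 1]))
         * [:- int (r n), 0, 1:]"
proof -
  obtain k where n: "n = Suc (Suc k)" using assms(1) by (metis add_2_eq_Suc le_Suc_ex)
  define l where "l = rev (map r [1..<Suc k])"
  have n1: "n - 1 = Suc k" using n by simp
  have r1: "rev (map r [1..<n+1]) = r (Suc (Suc k)) # r (Suc k) # l" by (simp add: l_def n)
  have r2: "rev (map r [1..<n]) = r (Suc k) # l" by (simp add: l_def n)
  have r3: "rev (map r [1..<n - 1]) = l" by (simp add: l_def n)
  have "sorted_wrt (\<lambda>x y. x \<le> y) (map r [1..<Suc (Suc k)])"
    by (rule sorted_wrt_map_mono[OF sorted_wrt_upt]) (use assms(3) n in \<open>auto intro: less_imp_le\<close>)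
  moreover have "r (Suc k) # l = rev (map r [1..<Suc (Suc k)])" by (simp add: l_def)
  ultimately have s: "sorted_wrt (\<lambda>x y. y \<le> x) (r (Suc k) # l)"
    by (simp only: sorted_wrt_rev)
  have ba: "r (Suc k) < r (Suc (Suc k))" using assms(3) n by auto
  show ?thesis unfolding C_def r1 r2 r3 unfolding n1 unfolding n by (rule crev_main[OF s ba])
qed



end
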